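(* Let $n, I, J_0, J_1, \dots, J_I$ be positive integers, let $P \subseteq \mathbb{R}^n$ be a closed convex set, let $c:\mathbb{R}^n \to \mathbb{R}$ and $\phi_{ij}:\mathbb{R}^n\to\mathbb{R}$ ($i=0,\dots,I$, $j=1,\dots,J_i$) be continuous functions, let $A\in\mathbb{R}^{I\times n}$ with rows $A_{i\bullet}$, let $\eta\in\mathbb{R}^I$, and let $\psi_{ij}\in\mathbb{R}$, with $\psi_{ij}^{\pm} = \max(\pm\psi_{ij},0)$. Define $$\theta(x) = c(x) + \sum_{j=1}^{J_0}\psi_{0j}\,\mathbf{1}_{[0,\infty)}(\phi_{0j}(x)),\qquad X_{\rm AHS} = \Big\{x\in P : A_{i\bullet}x + \sum_{j=1}^{J_i}\psi_{ij}\,\mathbf{1}_{[0,\infty)}(\phi_{ij}(x)) \ge \eta_i,\ i=1,\dots,I\Big\},$$ and for $\varepsilon>0$ $$\theta^{\varepsilon}(x) = c(x) + \sum_{j=1}^{J_0}\psi_{0j}^+\,\mathbf{1}_{[0,\infty)}(\phi_{0j}(x)) - \sum_{j=1}^{J_0}\psi_{0j}^-\,\mathbf{1}_{(-\varepsilon,\infty)}(\phi_{0j}(x)),$$ $$X_{\rm AHS}^{\varepsilon} = \Big\{x\in P : A_{i\bullet}x + \sum_{j=1}^{J_i}\psi_{ij}^+\,\mathbf{1}_{[0,\infty)}(\phi_{ij}(x)) - \sum_{j=1}^{J_i}\psi_{ij}^-\,\mathbf{1}_{(-\varepsilon,\infty)}(\phi_{ij}(x)) \ge \eta_i,\ i=1,\dots,I\Big\}.$$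 Suppose that $\sup_{x\in X_{\rm AHS}}\theta(x)$ is finite (in particular $X_{\rm AHS}\neq\emptyset$). Then $$\sup_{x\in X_{\rm AHS}}\theta(x) = \lim_{\varepsilon\downarrow 0}\ \sup_{x\in X^{\varepsilon}_{\rm AHS}}\theta^{\varepsilon}(x) = \sup_{\varepsilon>0}\ \sup_{x\in X^{\varepsilon}_{\rm AHS}}\theta^{\varepsilon}(x).$$ Furthermore, if $\sup_{x\in X_{\rm AHS}}\theta(x)$ is attained at some $x^*\in X_{\rm AHS}$, then there exists $\varepsilon_*>0$ such that $x^*$ is a maximizer of $\theta^{\varepsilon}$ on $X^{\varepsilon}_{\rm AHS}$ for all $\varepsilon\in(0,\varepsilon_*]$.
   Context: $\mathbf{1}_S$ denotes the indicator function of a set $S\subseteq\mathbb{R}$ (equal to $1$ on $S$ and $0$ elsewhere). The supremum over an empty set is $-\infty$. *)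

theory Defs
  imports "HOL-Analysis.Analysis"
begin

text \<open>Vectors of R^n are rendered as real^'n; the rows A_i of the matrix A are
  vectors A i (i = 1..I), so A_i x is the inner product A i \<bullet> x.
  Index i = 0 refers to the objective, i = 1..I to the constraints; j = 1..J i.\<close>

definition pos_part :: "real \<Rightarrow> real" where
  "pos_part t = max t 0"

definition neg_part :: "real \<Rightarrow> real" where
  "neg_part t = max (- t) 0"

definition theta ::
  "(real^'n \<Rightarrow> real) \<Rightarrow> (nat \<Rightarrow> nat) \<Rightarrow> (nat \<Rightarrow> nat \<Rightarrow> real)
   \<Rightarrow> (nat \<Rightarrow> nat \<Rightarrow> real^'n \<Rightarrow> real) \<Rightarrow> real^'n \<Rightarrow> real" where
  "theta c J psi phi x =
     c x + (\<Sum>j = 1..J 0. psi 0 j * indicator {0..} (phi 0 j x))"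

definition X_AHS ::
  "(real^'n) set \<Rightarrow> nat \<Rightarrow> (nat \<Rightarrow> real^'n) \<Rightarrow> (nat \<Rightarrow> real) \<Rightarrow> (nat \<Rightarrow> nat)
   \<Rightarrow> (nat \<Rightarrow> nat \<Rightarrow> real) \<Rightarrow> (nat \<Rightarrow> nat \<Rightarrow> real^'n \<Rightarrow> real) \<Rightarrow> (real^'n) set" where
  "X_AHS P I A eta J psi phi =
     {x \<in> P. \<forall>i \<in> {1..I}.
        A i \<bullet> x + (\<Sum>j = 1..J i. psi i j * indicator {0..} (phi i j x)) \<ge> eta i}"

definition theta_eps ::
  "real \<Rightarrow> (real^'n \<Rightarrow> real) \<Rightarrow> (nat \<Rightarrow> nat) \<Rightarrow> (nat \<Rightarrow> nat \<Rightarrow> real)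
   \<Rightarrow> (nat \<Rightarrow> nat \<Rightarrow> real^'n \<Rightarrow> real) \<Rightarrow> real^'n \<Rightarrow> real" where
  "theta_eps \<epsilon> c J psi phi x =
     c x + (\<Sum>j = 1..J 0. pos_part (psi 0 j) * indicator {0..} (phi 0 j x))
         - (\<Sum>j = 1..J 0. neg_part (psi 0 j) * indicator {-\<epsilon><..} (phi 0 j x))"

definition X_AHS_eps ::
  "real \<Rightarrow> (real^'n) set \<Rightarrow> nat \<Rightarrow> (nat \<Rightarrow> real^'n) \<Rightarrow> (nat \<Rightarrow> real) \<Rightarrow> (nat \<Rightarrow> nat)
   \<Rightarrow> (nat \<Rightarrow> nat \<Rightarrow> real) \<Rightarrow> (nat \<Rightarrow> nat \<Rightarrow> real^'n \<Rightarrow> real) \<Rightarrow> (real^'n) set" where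
  "X_AHS_eps \<epsilon> P I A eta J psi phi =
     {x \<in> P. \<forall>i \<in> {1..I}.
        A i \<bullet> x + (\<Sum>j = 1..J i. pos_part (psi i j) * indicator {0..} (phi i j x))
                - (\<Sum>j = 1..J i. neg_part (psi i j) * indicator {-\<epsilon><..} (phi i j x)) \<ge> eta i}"

text \<open>Supremum in the extended reals (Sup of the empty set is -\<infinity>).\<close>
definition esup :: "('a \<Rightarrow> real) \<Rightarrow> 'a set \<Rightarrow> ereal" where
  "esup f S = (SUP x\<in>S. ereal (f x))"

end

theory Submission
  imports Defs
begin

lemma ind_le: "(\<epsilon>::real) > 0 \<Longrightarrow> indicator {0..} t \<le> (indicator {-\<epsilon><..} t :: real)"
  by (auto simp: indicator_def)

lemma pn_le: "(0::real) \<le> a \<Longrightarrow> a \<le> b \<Longrightarrow> pos_part p * a - neg_part p * b \<le> p * a"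
proof -
  assume h: "0 \<le> a" "a \<le> b"
  have n0: "neg_part p \<ge> 0" by (simp add: neg_part_def)
  have 1: "neg_part p * a \<le> neg_part p * b" using h n0 by (rule_tac mult_left_mono) auto
  have 3: "pos_part p - neg_part p = p" by (simp add: pos_part_def neg_part_def max_def)
  have 2: "p * a = pos_part p * a - neg_part p * a" using 3 by (metis left_diff_distrib)
  show ?thesis using 1 2 by linarith
qed

lemma pn_eq: "pos_part p * a - neg_part p * a = (p::real) * a"
proof -
  have 3: "pos_part p - neg_part p = p" by (simp add: pos_part_def neg_part_def max_def)
  show ?thesis using 3 by (metis left_diff_distrib)
qed

lemma sum_le:
  fixes f :: "'a \<Rightarrow> real"
  assumes "\<epsilon> > 0"
  shows "(\<Sum>j\<in>S. pos_part (q j) * indicator {0..} (f j)) - (\<Sum>j\<in>S. neg_part (q j) * indicator {-\<epsilon><..} (f j))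
     \<le> (\<Sum>j\<in>S. q j * indicator {0..} (f j) :: real)"
  unfolding sum_subtractf[symmetric]
  by (intro sum_mono pn_le) (auto simp: ind_le[OF assms])

lemma sum_eq:
  fixes f :: "'a \<Rightarrow> real"
  assumes "\<forall>j\<in>S. indicator {-\<epsilon><..} (f j) = (indicator {0..} (f j) :: real)"
  shows "(\<Sum>j\<in>S. pos_part (q j) * indicator {0..} (f j)) - (\<Sum>j\<in>S. neg_part (q j) * indicator {-\<epsilon><..} (f j))
     = (\<Sum>j\<in>S. q j * indicator {0..} (f j) :: real)"
  unfolding sum_subtractf[symmetric] using assms
  by (intro sum.cong refl) (simp add: pn_eq)

lemma single_ev: "eventually (\<lambda>\<epsilon>. indicator {-\<epsilon><..} (t::real) = (indicator {0..} t :: real)) (at_right 0)"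
proof (cases "t \<ge> 0")
  case True
  show ?thesis unfolding eventually_at_right_field
    by (rule exI[of _ 1]) (use True in \<open>auto simp: indicator_def\<close>)
next
  case False
  show ?thesis unfolding eventually_at_right_field
    by (rule exI[of _ "-t"]) (use False in \<open>auto simp: indicator_def\<close>)
qed

lemma all_ev:
  fixes phi :: "nat \<Rightarrow> nat \<Rightarrow> 'a \<Rightarrow> real"
  shows "\<exists>e>0. \<forall>\<epsilon>. 0 < \<epsilon> \<and> \<epsilon> \<le> e \<longrightarrow>
    (\<forall>i\<in>{..I}. \<forall>j\<in>{1..J i}. indicator {-\<epsilon><..} (phi i j x) = (indicator {0..} (phi i j x) :: real))"
proof -
  have "eventually (\<lambda>\<epsilon>. \<forall>i\<in>{..I}. \<forall>j\<in>{1..J i}. indicator {-\<epsilon><..} (phi i j x) = (indicator {0..} (phi i j x) :: real)) (at_right 0)"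
    by (intro eventually_ball_finite ballI single_ev) auto
  then obtain b where b: "b > 0" "\<And>y. y > 0 \<Longrightarrow> y < b \<Longrightarrow>
      (\<forall>i\<in>{..I}. \<forall>j\<in>{1..J i}. indicator {-y<..} (phi i j x) = (indicator {0..} (phi i j x) :: real))"
    unfolding eventually_at_right_field by blast
  show ?thesis by (rule exI[of _ "b/2"]) (use b in auto)
qed

theorem proposition2:
  fixes P :: "(real^'n) set"
    and I :: nat and J :: "nat \<Rightarrow> nat"
    and c :: "real^'n \<Rightarrow> real"
    and phi :: "nat \<Rightarrow> nat \<Rightarrow> real^'n \<Rightarrow> real"
    and A :: "nat \<Rightarrow> real^'n"
    and eta :: "nat \<Rightarrow> real"
    and psi :: "nat \<Rightarrow> nat \<Rightarrow> real"
  assumes I_pos: "I > 0"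
    and J_pos: "\<forall>i \<le> I. J i > 0"
    and P_closed: "closed P" and P_convex: "convex P"
    and c_cont: "continuous_on UNIV c"
    and phi_cont: "\<forall>i \<le> I. \<forall>j \<in> {1..J i}. continuous_on UNIV (phi i j)"
    and finite_sup: "esup (theta c J psi phi) (X_AHS P I A eta J psi phi) \<noteq> \<infinity>"
                    "esup (theta c J psi phi) (X_AHS P I A eta J psi phi) \<noteq> -\<infinity>"
  shows "((\<lambda>\<epsilon>. esup (theta_eps \<epsilon> c J psi phi) (X_AHS_eps \<epsilon> P I A eta J psi phi))
            \<longlongrightarrow> esup (theta c J psi phi) (X_AHS P I A eta J psi phi)) (at_right 0)
       \<and> esup (theta c J psi phi) (X_AHS P I A eta J psi phi)
           = (SUP \<epsilon>\<in>{0<..}. esup (theta_eps \<epsilon> c J psi phi) (X_AHS_eps \<epsilon> P I A eta J psi phi))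
       \<and> (\<forall>xs. xs \<in> X_AHS P I A eta J psi phi
               \<and> ereal (theta c J psi phi xs) = esup (theta c J psi phi) (X_AHS P I A eta J psi phi)
            \<longrightarrow> (\<exists>\<epsilon>s>0. \<forall>\<epsilon>\<in>{0<..\<epsilon>s}.
                   xs \<in> X_AHS_eps \<epsilon> P I A eta J psi phi
                   \<and> (\<forall>y \<in> X_AHS_eps \<epsilon> P I A eta J psi phi.
                        theta_eps \<epsilon> c J psi phi y \<le> theta_eps \<epsilon> c J psi phi xs)))"
proof -
  define X where "X = X_AHS P I A eta J psi phi"
  define Xe where "Xe = (\<lambda>\<epsilon>. X_AHS_eps \<epsilon> P I A eta J psi phi)"
  define th where "th = theta c J psi phi"
  define the where "the = (\<lambda>\<epsilon>. theta_eps \<epsilon> c J psi phi)"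
  define L where "L = esup th X"
  define f where "f = (\<lambda>\<epsilon>. esup (the \<epsilon>) (Xe \<epsilon>))"
  have sub: "Xe \<epsilon> \<subseteq> X" if "\<epsilon> > 0" for \<epsilon>
  proof
    fix y assume "y \<in> Xe \<epsilon>"
    then have y: "y \<in> P" "\<forall>i\<in>{1..I}.
        A i \<bullet> y + (\<Sum>j = 1..J i. pos_part (psi i j) * indicator {0..} (phi i j y))
                - (\<Sum>j = 1..J i. neg_part (psi i j) * indicator {-\<epsilon><..} (phi i j y)) \<ge> eta i"
      unfolding Xe_def X_AHS_eps_def by auto
    have "A i \<bullet> y + (\<Sum>j = 1..J i. psi i j * indicator {0..} (phi i j y)) \<ge> eta i" if i: "i \<in> {1..I}" for i
      using y(2) i sum_le[OF \<open>\<epsilon> > 0\<close>, of "psi i" "\<lambda>j. phi i j y" "{1..J i}"] by fastforce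
    then show "y \<in> X" using y(1) unfolding X_def X_AHS_def by auto
  qed
  have thle: "the \<epsilon> y \<le> th y" if "\<epsilon> > 0" for \<epsilon> y
    unfolding the_def th_def theta_eps_def theta_def
    using add_left_mono[OF sum_le[OF that, of "psi 0" "\<lambda>j. phi 0 j y" "{1..J 0}"], of "c y"]
    by (simp only: add_diff_eq)
  have fle: "f \<epsilon> \<le> L" if "\<epsilon> > 0" for \<epsilon>
    unfolding f_def L_def esup_def
    by (rule SUP_mono) (use sub[OF that] thle[OF that] in auto)
  have good: "\<exists>e>0. \<forall>\<epsilon>. 0 < \<epsilon> \<and> \<epsilon> \<le> e \<longrightarrow> x \<in> Xe \<epsilon> \<and> the \<epsilon> x = th x" if x: "x \<in> X" for x
  proof -
    obtain e where e: "e > 0" "\<forall>\<epsilon>. 0 < \<epsilon> \<and> \<epsilon> \<le> e \<longrightarrow>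
      (\<forall>i\<in>{..I}. \<forall>j\<in>{1..J i}. indicator {-\<epsilon><..} (phi i j x) = (indicator {0..} (phi i j x) :: real))"
      using all_ev[of I J phi x] by blast
    show ?thesis
    proof (intro exI[of _ e] conjI allI impI e(1))
      fix \<epsilon> assume h: "0 < \<epsilon> \<and> \<epsilon> \<le> e"
      have eq: "\<And>i. i \<le> I \<Longrightarrow> \<forall>j\<in>{1..J i}. indicator {-\<epsilon><..} (phi i j x) = (indicator {0..} (phi i j x) :: real)"
        using e(2) h by auto
      show "the \<epsilon> x = th x" unfolding the_def th_def theta_eps_def theta_def
        using sum_eq[OF eq[of 0], of "psi 0"] by (simp only: add_diff_eq[symmetric])
      have x2: "x \<in> P" "\<forall>i\<in>{1..I}.
        A i \<bullet> x + (\<Sum>j = 1..J i. psi i j * indicator {0..} (phi i j x)) \<ge> eta i"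
        using x unfolding X_def X_AHS_def by auto
      have "A i \<bullet> x + (\<Sum>j = 1..J i. pos_part (psi i j) * indicator {0..} (phi i j x))
                - (\<Sum>j = 1..J i. neg_part (psi i j) * indicator {-\<epsilon><..} (phi i j x)) \<ge> eta i"
        if i: "i \<in> {1..I}" for i
        using x2(2) i sum_eq[OF eq[of i], of "psi i"] by (simp add: add_diff_eq[symmetric])
      then show "x \<in> Xe \<epsilon>" using x2(1) unfolding Xe_def X_AHS_eps_def by auto
    qed
  qed
  have lower: "ereal (th x) \<le> f \<epsilon>" if "x \<in> X" "x \<in> Xe \<epsilon>" "the \<epsilon> x = th x" for x \<epsilon>
    unfolding f_def esup_def using that by (metis SUP_upper)
  have part1: "(f \<longlongrightarrow> L) (at_right 0)"
  proof (rule order_tendstoI)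
    fix y assume "y < L"
    then obtain x where x: "x \<in> X" "y < ereal (th x)"
      unfolding L_def esup_def by (auto simp: less_SUP_iff)
    obtain e where e: "e > 0" "\<forall>\<epsilon>. 0 < \<epsilon> \<and> \<epsilon> \<le> e \<longrightarrow> x \<in> Xe \<epsilon> \<and> the \<epsilon> x = th x"
      using good[OF x(1)] by blast
    show "eventually (\<lambda>\<epsilon>. y < f \<epsilon>) (at_right 0)"
      unfolding eventually_at_right_field
      by (rule exI[of _ e]) (use e x lower in \<open>fastforce intro: less_le_trans\<close>)
  next
    fix y assume "L < y"
    then show "eventually (\<lambda>\<epsilon>. f \<epsilon> < y) (at_right 0)"
      unfolding eventually_at_right_field
      by (rule_tac exI[of _ 1]) (auto intro: le_less_trans fle)
  qed
  have part2: "L = (SUP \<epsilon>\<in>{0<..}. f \<epsilon>)"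
  proof (rule antisym)
    show "L \<le> (SUP \<epsilon>\<in>{0<..}. f \<epsilon>)"
      unfolding L_def esup_def
    proof (rule SUP_least)
      fix x assume x: "x \<in> X"
      obtain e where e: "e > 0" "\<forall>\<epsilon>. 0 < \<epsilon> \<and> \<epsilon> \<le> e \<longrightarrow> x \<in> Xe \<epsilon> \<and> the \<epsilon> x = th x"
        using good[OF x] by blast
      have "ereal (th x) \<le> f e" using e x lower by auto
      also have "\<dots> \<le> (SUP \<epsilon>\<in>{0<..}. f \<epsilon>)" using e(1) by (intro SUP_upper) auto
      finally show "ereal (th x) \<le> (SUP \<epsilon>\<in>{0<..}. f \<epsilon>)" .
    qed
    show "(SUP \<epsilon>\<in>{0<..}. f \<epsilon>) \<le> L" by (rule SUP_least) (auto intro: fle)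
  qed
  have part3: "\<exists>\<epsilon>s>0. \<forall>\<epsilon>\<in>{0<..\<epsilon>s}. xs \<in> Xe \<epsilon> \<and> (\<forall>y \<in> Xe \<epsilon>. the \<epsilon> y \<le> the \<epsilon> xs)"
    if xs: "xs \<in> X" "ereal (th xs) = L" for xs
  proof -
    obtain e where e: "e > 0" "\<forall>\<epsilon>. 0 < \<epsilon> \<and> \<epsilon> \<le> e \<longrightarrow> xs \<in> Xe \<epsilon> \<and> the \<epsilon> xs = th xs"
      using good[OF xs(1)] by blast
    show ?thesis
    proof (intro exI[of _ e] conjI ballI e(1))
      fix \<epsilon> assume h: "\<epsilon> \<in> {0<..e}"
      then show "xs \<in> Xe \<epsilon>" using e by auto
      fix y assume y: "y \<in> Xe \<epsilon>"
      have "y \<in> X" using sub y h by auto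
      then have "ereal (th y) \<le> L" unfolding L_def esup_def by (rule SUP_upper)
      then have "th y \<le> th xs" using xs(2) by (metis ereal_less_eq(3))
      then show "the \<epsilon> y \<le> the \<epsilon> xs" using thle[of \<epsilon> y] e h by auto
    qed
  qed
  show ?thesis
    using part1 part2 part3
    unfolding f_def L_def X_def Xe_def th_def the_def by blast
qed

end
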